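(* Let $k,l,m,n$ be positive integers with $k^n\equiv 1\pmod m$ and $l(k-1)\equiv 0\pmod m$, and let $G=\langle a,b;\ a^m=1,\ b^n=a^l,\ b^{-1}ab=a^k\rangle$. Then $G$ has trivial centre if and only if $(m,k-1)=1$ and $n=\mathrm{ind}_m(k)$.
   Context: $\mathrm{ind}_m(k)$ is the least positive integer $d$ with $k^d\equiv 1\pmod m$. *)

theory Defs
  imports "HOL-Algebra.Algebra" "HOL-Number_Theory.Cong"
begin

definition ind_mod :: "nat \<Rightarrow> nat \<Rightarrow> nat" where
  "ind_mod m k = (LEAST d. 0 < d \<and> [k ^ d = 1] (mod m))"

definition group_center :: "('a, 'b) monoid_scheme \<Rightarrow> 'a set" where
  "group_center G = {x \<in> carrier G. \<forall>y \<in> carrier G. x \<otimes>\<^bsub>G\<^esub> y = y \<otimes>\<^bsub>G\<^esub> x}"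

definition meta_rels ::
  "('c, 'd) monoid_scheme \<Rightarrow> 'c \<Rightarrow> 'c \<Rightarrow> nat \<Rightarrow> nat \<Rightarrow> nat \<Rightarrow> nat \<Rightarrow> bool" where
  "meta_rels H x y m n k l \<longleftrightarrow>
     x \<in> carrier H \<and> y \<in> carrier H \<and>
     x [^]\<^bsub>H\<^esub> m = \<one>\<^bsub>H\<^esub> \<and>
     y [^]\<^bsub>H\<^esub> n = x [^]\<^bsub>H\<^esub> l \<and>
     inv\<^bsub>H\<^esub> y \<otimes>\<^bsub>H\<^esub> x \<otimes>\<^bsub>H\<^esub> y = x [^]\<^bsub>H\<^esub> k"

text \<open>The universal property is quantified over groups
  whose carrier lives in the countable type nat; since finitely presented groups
  are countable this determines G up to isomorphism.\<close>
definition presents_meta ::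
  "('g, 'e) monoid_scheme \<Rightarrow> 'g \<Rightarrow> 'g \<Rightarrow> nat \<Rightarrow> nat \<Rightarrow> nat \<Rightarrow> nat \<Rightarrow> bool" where
  "presents_meta G a b m n k l \<longleftrightarrow>
     group G \<and> meta_rels G a b m n k l \<and>
     generate G {a, b} = carrier G \<and>
     (\<forall>(H :: nat monoid) x y. group H \<and> meta_rels H x y m n k l \<longrightarrow>
        (\<exists>h \<in> hom G H. h a = x \<and> h b = y))"

end

theory Submission imports Defs begin

lemma div3: "(a + b) div n + ((a + b) mod n + c) div n = (a + b + c) div (n::nat)"
  by (simp add: div_add1_eq[of "a+b" c n] div_add1_eq[of "(a+b) mod n" c n])

locale mp =
  fixes m n k l :: nat
  assumes m0: "0 < m" and n0: "0 < n" and k0: "0 < k"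
    and kn: "[k ^ n = 1] (mod m)" and lk0: "[l * (k - 1) = 0] (mod m)"
begin

lemma lk: "[l * k = l] (mod m)"
proof -
  have "l * k = l * (k - 1) + l" using k0 by (cases k) auto
  then show ?thesis using cong_add[OF lk0 cong_refl[of l]] by simp
qed

lemma lkj: "[l * k ^ j = l] (mod m)"
proof (induction j)
  case 0 then show ?case by simp
next
  case (Suc j)
  have "l * k ^ Suc j = (l * k ^ j) * k" by simp
  also have "[\<dots> = l * k] (mod m)" using cong_mult[OF Suc cong_refl[of k]] .
  finally show ?case using lk by (rule cong_trans)
qed

lemma kmod: "[k ^ (j mod n) = k ^ j] (mod m)"
proof -
  have "k ^ j = k ^ (n * (j div n) + j mod n)" by simp
  also have "\<dots> = (k ^ n) ^ (j div n) * k ^ (j mod n)" by (simp only: power_add power_mult)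
  finally have "k ^ j = (k ^ n) ^ (j div n) * k ^ (j mod n)" .
  moreover have "[(k ^ n) ^ (j div n) * k ^ (j mod n) = 1 ^ (j div n) * k ^ (j mod n)] (mod m)"
    by (intro cong_mult cong_pow kn cong_refl)
  ultimately show ?thesis by (simp add: cong_sym)
qed

lemma assoc2:
  "(((i1*k^j2 + i2 + l*((j1+j2) div n)) mod m) * k^j3 + i3 + l*(((j1+j2) mod n + j3) div n)) mod m
   = (i1*k^((j2+j3) mod n) + ((i2*k^j3 + i3 + l*((j2+j3) div n)) mod m) + l*((j1 + (j2+j3) mod n) div n)) mod m"
proof -
  let ?E = "i1*k^(j2+j3) + i2*k^j3 + i3 + l*((j1+j2+j3) div n)"
  have e1: "l*((j1+j2) div n) + l*(((j1+j2) mod n + j3) div n) = l*((j1+j2+j3) div n)"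
    using div3[of j1 j2 n j3] by (simp only: flip: distrib_left)
  have e2: "l*((j2+j3) div n) + l*((j1 + (j2+j3) mod n) div n) = l*((j1+j2+j3) div n)"
  proof -
    have "(j2+j3) div n + (j1 + (j2+j3) mod n) div n = (j1+j2+j3) div n"
      using div3[of j2 j3 n j1] by (simp add: ac_simps)
    then show ?thesis by (simp only: flip: distrib_left)
  qed
  have L: "[((i1*k^j2 + i2 + l*((j1+j2) div n)) mod m) * k^j3 + i3 + l*(((j1+j2) mod n + j3) div n) = ?E] (mod m)"
  proof -
    have "[((i1*k^j2 + i2 + l*((j1+j2) div n)) mod m) * k^j3 + i3 + l*(((j1+j2) mod n + j3) div n)
        = (i1*k^j2 + i2 + l*((j1+j2) div n)) * k^j3 + i3 + l*(((j1+j2) mod n + j3) div n)] (mod m)"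
      by (intro cong_add cong_mult cong_refl) (simp add: cong_def)
    also have "(i1*k^j2 + i2 + l*((j1+j2) div n)) * k^j3 + i3 + l*(((j1+j2) mod n + j3) div n)
       = i1*k^(j2+j3) + i2*k^j3 + i3 + (l*k^j3)*((j1+j2) div n) + l*(((j1+j2) mod n + j3) div n)"
      by (simp add: algebra_simps power_add)
    also have "[i1*k^(j2+j3) + i2*k^j3 + i3 + (l*k^j3)*((j1+j2) div n) + l*(((j1+j2) mod n + j3) div n)
        = i1*k^(j2+j3) + i2*k^j3 + i3 + l*((j1+j2) div n) + l*(((j1+j2) mod n + j3) div n)] (mod m)"
      by (intro cong_add cong_mult cong_refl lkj)
    also have "i1*k^(j2+j3) + i2*k^j3 + i3 + l*((j1+j2) div n) + l*(((j1+j2) mod n + j3) div n) = ?E"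
      by (simp only: add.assoc e1)
    finally show ?thesis .
  qed
  have R: "[i1*k^((j2+j3) mod n) + ((i2*k^j3 + i3 + l*((j2+j3) div n)) mod m) + l*((j1 + (j2+j3) mod n) div n) = ?E] (mod m)"
  proof -
    have "[i1*k^((j2+j3) mod n) + ((i2*k^j3 + i3 + l*((j2+j3) div n)) mod m) + l*((j1 + (j2+j3) mod n) div n)
       = i1*k^(j2+j3) + (i2*k^j3 + i3 + l*((j2+j3) div n)) + l*((j1 + (j2+j3) mod n) div n)] (mod m)"
      by (intro cong_add cong_mult cong_refl kmod) (simp add: cong_def)
    also have "i1*k^(j2+j3) + (i2*k^j3 + i3 + l*((j2+j3) div n)) + l*((j1 + (j2+j3) mod n) div n) = ?E"
      by (simp only: add.assoc e2)
    finally show ?thesis .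
  qed
  show ?thesis using L R unfolding cong_def by simp
qed

definition Hmul :: "nat \<Rightarrow> nat \<Rightarrow> nat" where
  "Hmul x y = ((x div m + y div m) mod n) * m +
     ((x mod m) * k ^ (y div m) + y mod m + l * ((x div m + y div m) div n)) mod m"

definition H :: "nat monoid" where
  "H = \<lparr>carrier = {..< n * m}, monoid.mult = Hmul, monoid.one = 0\<rparr>"

lemma enc_div [simp]: "i < m \<Longrightarrow> (j * m + i) div m = j"
  by simp
lemma enc_mod [simp]: "i < m \<Longrightarrow> (j * m + i) mod m = i"
  by simp

lemma Hmul_enc: "i < m \<Longrightarrow> i' < m \<Longrightarrow>
  Hmul (j * m + i) (j' * m + i') = ((j + j') mod n) * m + (i * k ^ j' + i' + l * ((j + j') div n)) mod m"
  by (simp add: Hmul_def)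

lemma enc_lt: "j < n \<Longrightarrow> i < m \<Longrightarrow> j * m + i < n * m"
proof -
  assume "j < n" "i < m"
  then have "j * m + i < j * m + m" by simp
  also have "\<dots> = (j + 1) * m" by simp
  also have "\<dots> \<le> n * m" using \<open>j < n\<close> by (intro mult_right_mono) auto
  finally show ?thesis .
qed

lemma carrier_dec: "x < n * m \<Longrightarrow> x = (x div m) * m + x mod m \<and> x div m < n \<and> x mod m < m"
  using m0 by (auto simp: less_mult_imp_div_less)
  
lemma enc_inj: "i < m \<Longrightarrow> i' < m \<Longrightarrow> j * m + i = j' * m + i' \<longleftrightarrow> j = j' \<and> i = i'"
  by (metis enc_div enc_mod)

lemma H_carrier: "carrier H = {..< n * m}" and H_mult: "x \<otimes>\<^bsub>H\<^esub> y = Hmul x y" and H_one: "\<one>\<^bsub>H\<^esub> = 0"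
  by (simp_all add: H_def)

lemma H_mult_enc: "i < m \<Longrightarrow> i' < m \<Longrightarrow>
  (j * m + i) \<otimes>\<^bsub>H\<^esub> (j' * m + i') = ((j + j') mod n) * m + (i * k ^ j' + i' + l * ((j + j') div n)) mod m"
  by (simp add: H_mult Hmul_enc)

lemma H_group: "group H"
proof (rule groupI)
  fix x y assume "x \<in> carrier H" "y \<in> carrier H"
  then show "x \<otimes>\<^bsub>H\<^esub> y \<in> carrier H"
    unfolding H_carrier H_mult Hmul_def using m0 n0 enc_lt by auto
next
  show "\<one>\<^bsub>H\<^esub> \<in> carrier H" using m0 n0 by (simp add: H_carrier H_one)
next
  fix x y z assume "x \<in> carrier H" "y \<in> carrier H" "z \<in> carrier H"
  then obtain j1 i1 j2 i2 j3 i3 where x: "x = j1 * m + i1" "j1 < n" "i1 < m"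
    and y: "y = j2 * m + i2" "j2 < n" "i2 < m" and z: "z = j3 * m + i3" "j3 < n" "i3 < m"
    unfolding H_carrier by (metis lessThan_iff carrier_dec)
  have mm: "a mod m < m" for a using m0 by simp
  show "(x \<otimes>\<^bsub>H\<^esub> y) \<otimes>\<^bsub>H\<^esub> z = x \<otimes>\<^bsub>H\<^esub> (y \<otimes>\<^bsub>H\<^esub> z)"
    unfolding x y z
    apply (simp only: H_mult_enc x y z mm)
    apply (subst enc_inj[OF mm mm])
    apply (rule conjI[OF _ assoc2])
    apply (simp add: mod_add_left_eq mod_add_right_eq add.assoc)
    done
next
  fix x assume "x \<in> carrier H"
  then obtain j i where x: "x = j * m + i" "j < n" "i < m"
    unfolding H_carrier by (metis lessThan_iff carrier_dec)
  have "(0::nat) = 0 * m + 0" by simp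
  then show "\<one>\<^bsub>H\<^esub> \<otimes>\<^bsub>H\<^esub> x = x" using x m0
    by (metis H_mult_enc H_one add_0 mod_less div_less mult_0_right power_0 mult_0 add_0_right)
next
  fix x assume "x \<in> carrier H"
  then obtain j i where x: "x = j * m + i" "j < n" "i < m"
    unfolding H_carrier by (metis lessThan_iff carrier_dec)
  define j' where "j' = (n - j) mod n"
  define c where "c = (j' + j) div n"
  define r where "r = (i + l * c) mod m"
  define i' where "i' = ((m - r) * k ^ (n - j)) mod m"
  have i'm: "i' < m" using m0 by (simp add: i'_def)
  have j'n: "j' < n" using n0 by (simp add: j'_def)
  have "(j' * m + i') \<otimes>\<^bsub>H\<^esub> x = ((j' + j) mod n) * m + (i' * k ^ j + i + l * c) mod m"
    using x i'm by (simp add: H_mult_enc c_def)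
  moreover have "(j' + j) mod n = 0"
    unfolding j'_def using x(2) by (simp add: mod_add_left_eq)
  moreover have "(i' * k ^ j + i + l * c) mod m = 0"
  proof -
    have "[i' * k ^ j + (i + l * c) = (m - r) * k ^ (n - j) * k ^ j + (i + l * c)] (mod m)"
      unfolding i'_def by (intro cong_add cong_mult cong_refl) (simp add: cong_def)
    then have "[i' * k ^ j + i + l * c = (m - r) * k ^ (n - j) * k ^ j + (i + l * c)] (mod m)"
      by (simp add: add.assoc)
    moreover have "(m - r) * k ^ (n - j) * k ^ j = (m - r) * k ^ n"
      using x(2) by (simp add: power_add[symmetric])
    moreover have "[(m - r) * k ^ n + (i + l * c) = (m - r) * 1 + r] (mod m)"
      unfolding r_def by (intro cong_add cong_mult cong_refl kn) (simp add: cong_def)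
    moreover have "(m - r) * 1 + r = m" using m0 by (simp add: r_def)
    ultimately have "[i' * k ^ j + i + l * c = m] (mod m)" by (metis cong_trans)
    then show ?thesis by (simp add: cong_def)
  qed
  ultimately have "(j' * m + i') \<otimes>\<^bsub>H\<^esub> x = \<one>\<^bsub>H\<^esub>" by (simp add: H_one)
  moreover have "j' * m + i' \<in> carrier H" using enc_lt[OF j'n i'm] by (simp add: H_carrier)
  ultimately show "\<exists>y\<in>carrier H. y \<otimes>\<^bsub>H\<^esub> x = \<one>\<^bsub>H\<^esub>" by blast
qed


definition xH :: nat where "xH = 0 * m + 1 mod m"
definition yH :: nat where "yH = (1 mod n) * m + (l * (1 div n)) mod m"

lemma mm: "a mod m < m" using m0 by simp

lemma xH_pow: "xH [^]\<^bsub>H\<^esub> i = 0 * m + i mod m"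
proof (induction i)
  case 0 then show ?case by (simp add: H_one)
next
  case (Suc i)
  have "xH [^]\<^bsub>H\<^esub> Suc i = (0 * m + i mod m) \<otimes>\<^bsub>H\<^esub> (0 * m + 1 mod m)"
    unfolding nat_pow_Suc Suc.IH by (simp only: xH_def)
  also have "\<dots> = 0 * m + (i mod m + 1 mod m) mod m"
    by (simp only: H_mult_enc mm) (simp add: n0)
  also have "\<dots> = 0 * m + Suc i mod m" by (simp only: mod_add_eq Suc_eq_plus1)
  finally show ?case .
qed

lemma yH_pow: "yH [^]\<^bsub>H\<^esub> j = (j mod n) * m + (l * (j div n)) mod m"
proof (induction j)
  case 0 then show ?case by (simp add: H_one)
next
  case (Suc j)
  have "yH [^]\<^bsub>H\<^esub> Suc j = ((j mod n) * m + (l * (j div n)) mod m) \<otimes>\<^bsub>H\<^esub> ((1 mod n) * m + (l * (1 div n)) mod m)"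
    unfolding nat_pow_Suc Suc.IH by (simp only: yH_def)
  also have "\<dots> = ((j mod n + 1 mod n) mod n) * m + ((l * (j div n)) mod m * k ^ (1 mod n) + (l * (1 div n)) mod m + l * ((j mod n + 1 mod n) div n)) mod m"
    by (simp only: H_mult_enc mm)
  also have "\<dots> = (Suc j mod n) * m + (l * (Suc j div n)) mod m"
  proof -
    have E1: "(j mod n + 1 mod n) mod n = Suc j mod n" by (simp only: mod_add_eq Suc_eq_plus1)
    have "[(l * (j div n)) mod m * k ^ (1 mod n) + (l * (1 div n)) mod m + l * ((j mod n + 1 mod n) div n)
       = (l * k ^ (1 mod n)) * (j div n) + l * (1 div n) + l * ((j mod n + 1 mod n) div n)] (mod m)"
    proof (intro cong_add cong_refl)
      have "[(l * (j div n)) mod m * k ^ (1 mod n) = (l * (j div n)) * k ^ (1 mod n)] (mod m)"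
        by (intro cong_mult cong_refl) (simp add: cong_def)
      then show "[(l * (j div n)) mod m * k ^ (1 mod n) = (l * k ^ (1 mod n)) * (j div n)] (mod m)"
        by (simp only: ac_simps)
      show "[(l * (1 div n)) mod m = l * (1 div n)] (mod m)" by (simp add: cong_def)
    qed
    also have "[(l * k ^ (1 mod n)) * (j div n) + l * (1 div n) + l * ((j mod n + 1 mod n) div n)
       = l * (j div n) + l * (1 div n) + l * ((j mod n + 1 mod n) div n)] (mod m)"
      by (intro cong_add cong_mult cong_refl lkj)
    also have "l * (j div n) + l * (1 div n) + l * ((j mod n + 1 mod n) div n) = l * (Suc j div n)"
    proof -
      have "j div n + 1 div n + (j mod n + 1 mod n) div n = (j + 1) div n"
        by (rule div_add1_eq[symmetric])
      then show ?thesis unfolding Suc_eq_plus1 by (simp only: flip: distrib_left)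
    qed
    finally have C: "[(l * (j div n)) mod m * k ^ (1 mod n) + (l * (1 div n)) mod m + l * ((j mod n + 1 mod n) div n)
       = l * (Suc j div n)] (mod m)" .
    show ?thesis by (simp only: E1 C[unfolded cong_def])
  qed
  finally show ?case .
qed

lemma xH_in: "xH \<in> carrier H"
proof -
  have "0 * m + 1 mod m < n * m" by (rule enc_lt[OF n0 mm])
  then show ?thesis unfolding xH_def H_carrier by (simp only: lessThan_iff)
qed

lemma yH_in: "yH \<in> carrier H"
proof -
  have "(1 mod n) * m + (l * (1 div n)) mod m < n * m" by (rule enc_lt[OF mod_less_divisor[OF n0] mm])
  then show ?thesis unfolding yH_def H_carrier by (simp only: lessThan_iff)
qed

lemma H_rels: "meta_rels H xH yH m n k l"
proof -
  interpret group H by (rule H_group)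
  have 1: "xH [^]\<^bsub>H\<^esub> m = \<one>\<^bsub>H\<^esub>" by (simp add: xH_pow H_one)
  have 2: "yH [^]\<^bsub>H\<^esub> n = xH [^]\<^bsub>H\<^esub> l" by (simp add: xH_pow yH_pow n0)
  have 3: "xH \<otimes>\<^bsub>H\<^esub> yH = yH \<otimes>\<^bsub>H\<^esub> xH [^]\<^bsub>H\<^esub> k"
  proof -
    have e1: "xH \<otimes>\<^bsub>H\<^esub> yH = ((0 + 1 mod n) mod n) * m + ((1 mod m) * k ^ (1 mod n) + (l * (1 div n)) mod m + l * ((0 + 1 mod n) div n)) mod m"
      unfolding xH_def yH_def by (simp only: H_mult_enc mm)
    have e2: "yH \<otimes>\<^bsub>H\<^esub> xH [^]\<^bsub>H\<^esub> k = ((1 mod n + 0) mod n) * m + ((l * (1 div n)) mod m * k ^ 0 + k mod m + l * ((1 mod n + 0) div n)) mod m"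
      unfolding xH_pow yH_def by (simp only: H_mult_enc mm)
    have C: "[(1 mod m) * k ^ (1 mod n) + (l * (1 div n)) mod m + l * ((0 + 1 mod n) div n)
       = (l * (1 div n)) mod m * k ^ 0 + k mod m + l * ((1 mod n + 0) div n)] (mod m)"
    proof -
      have "[(1 mod m) * k ^ (1 mod n) = k mod m] (mod m)"
      proof -
        have "[(1 mod m) * k ^ (1 mod n) = 1 * k ^ 1] (mod m)"
          by (rule cong_mult[OF _ kmod[of 1]]) (simp add: cong_def)
        then have "[(1 mod m) * k ^ (1 mod n) = k] (mod m)" by (simp only: mult_1_left power_one_right)
        moreover have "[k = k mod m] (mod m)" by (simp add: cong_def)
        ultimately show ?thesis by (rule cong_trans)
      qed
      then have "[(1 mod m) * k ^ (1 mod n) + (l * (1 div n)) mod m + l * ((0 + 1 mod n) div n)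
          = k mod m + (l * (1 div n)) mod m + l * ((0 + 1 mod n) div n)] (mod m)"
        by (intro cong_add cong_refl)
      also have "k mod m + (l * (1 div n)) mod m + l * ((0 + 1 mod n) div n)
          = (l * (1 div n)) mod m * k ^ 0 + k mod m + l * ((1 mod n + 0) div n)"
        by (simp only: add_0_left add_0_right power_0 mult_1_right ac_simps)
      finally show ?thesis .
    qed
    show ?thesis unfolding e1 e2 using C unfolding cong_def by (simp only: add_0_left add_0_right)
  qed
  have 4: "inv\<^bsub>H\<^esub> yH \<otimes>\<^bsub>H\<^esub> xH \<otimes>\<^bsub>H\<^esub> yH = xH [^]\<^bsub>H\<^esub> k"
  proof -
    have "inv\<^bsub>H\<^esub> yH \<otimes>\<^bsub>H\<^esub> xH \<otimes>\<^bsub>H\<^esub> yH = inv\<^bsub>H\<^esub> yH \<otimes>\<^bsub>H\<^esub> (xH \<otimes>\<^bsub>H\<^esub> yH)"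
      using xH_in yH_in by (simp add: m_assoc)
    also have "\<dots> = inv\<^bsub>H\<^esub> yH \<otimes>\<^bsub>H\<^esub> (yH \<otimes>\<^bsub>H\<^esub> xH [^]\<^bsub>H\<^esub> k)" by (simp only: 3)
    also have "\<dots> = (inv\<^bsub>H\<^esub> yH \<otimes>\<^bsub>H\<^esub> yH) \<otimes>\<^bsub>H\<^esub> xH [^]\<^bsub>H\<^esub> k"
      by (simp only: m_assoc[OF inv_closed[OF yH_in] yH_in nat_pow_closed[OF xH_in]])
    also have "\<dots> = xH [^]\<^bsub>H\<^esub> k" by (simp only: l_inv[OF yH_in] l_one[OF nat_pow_closed[OF xH_in]])
    finally show ?thesis .
  qed
  show ?thesis unfolding meta_rels_def using 1 2 4 xH_in yH_in by simp
qed


lemma ckj: "[c * k = c] (mod m) \<Longrightarrow> [c * k ^ j = c] (mod m)"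
proof (induction j)
  case 0 then show ?case by simp
next
  case (Suc j)
  have "c * k ^ Suc j = (c * k ^ j) * k" by simp
  also have "[\<dots> = c * k] (mod m)" using cong_mult[OF Suc(1)[OF Suc(2)] cong_refl[of k]] .
  finally show ?case using Suc(2) by (rule cong_trans)
qed

lemma comm_enc: "i < m \<Longrightarrow> i' < m \<Longrightarrow>
  ((j * m + i) \<otimes>\<^bsub>H\<^esub> (j' * m + i') = (j' * m + i') \<otimes>\<^bsub>H\<^esub> (j * m + i)) \<longleftrightarrow>
   [i * k ^ j' + i' = i' * k ^ j + i] (mod m)"
proof -
  assume i: "i < m" "i' < m"
  have e1: "(j * m + i) \<otimes>\<^bsub>H\<^esub> (j' * m + i') = ((j + j') mod n) * m + (i * k ^ j' + i' + l * ((j + j') div n)) mod m"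
    by (rule H_mult_enc[OF i])
  have e2: "(j' * m + i') \<otimes>\<^bsub>H\<^esub> (j * m + i) = ((j + j') mod n) * m + (i' * k ^ j + i + l * ((j + j') div n)) mod m"
    using H_mult_enc[OF i(2) i(1), of j' j] by (simp only: add.commute[of j'])
  have "((j + j') mod n) * m + (i * k ^ j' + i' + l * ((j + j') div n)) mod m = ((j + j') mod n) * m + (i' * k ^ j + i + l * ((j + j') div n)) mod m
     \<longleftrightarrow> (i * k ^ j' + i' + l * ((j + j') div n)) mod m = (i' * k ^ j + i + l * ((j + j') div n)) mod m"
    by (simp only: enc_inj[OF mm mm] simp_thms)
  also have "\<dots> \<longleftrightarrow> [i * k ^ j' + i' = i' * k ^ j + i] (mod m)"
    by (simp only: cong_add_rcancel_nat flip: cong_def)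
  finally show ?thesis by (simp only: e1 e2)
qed

definition centH :: bool where
  "centH \<longleftrightarrow> (\<forall>w\<in>carrier H. (\<forall>v\<in>carrier H. w \<otimes>\<^bsub>H\<^esub> v = v \<otimes>\<^bsub>H\<^esub> w) \<longrightarrow> w = 0)"

lemma ind_iff: "n = ind_mod m k \<longleftrightarrow> (\<forall>j. 0 < j \<and> j < n \<longrightarrow> \<not> [k ^ j = 1] (mod m))"
proof
  assume "n = ind_mod m k"
  then show "\<forall>j. 0 < j \<and> j < n \<longrightarrow> \<not> [k ^ j = 1] (mod m)"
    unfolding ind_mod_def by (metis (no_types, lifting) not_less_Least)
next
  assume A: "\<forall>j. 0 < j \<and> j < n \<longrightarrow> \<not> [k ^ j = 1] (mod m)"
  show "n = ind_mod m k" unfolding ind_mod_def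
    by (rule Least_equality[symmetric]) (use n0 kn A in \<open>auto simp: not_less[symmetric]\<close>)
qed

lemma gcd_iff: "gcd m (k - 1) = 1 \<longleftrightarrow> (\<forall>i. i < m \<and> [i * k = i] (mod m) \<longrightarrow> i = 0)"
proof -
  have eq: "[i * k = i] (mod m) \<longleftrightarrow> m dvd i * (k - 1)" for i
  proof -
    have "i * k = i * (k - 1) + i" using k0 by (cases k) auto
    then show ?thesis using cong_add_rcancel_0_nat[of "i * (k - 1)" i m] by (simp add: cong_0_iff)
  qed
  show ?thesis
  proof
    assume g: "gcd m (k - 1) = 1"
    show "\<forall>i. i < m \<and> [i * k = i] (mod m) \<longrightarrow> i = 0"
    proof (intro allI impI)
      fix i assume "i < m \<and> [i * k = i] (mod m)"
      then have "i < m" "m dvd i * (k - 1)" using eq by auto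
      then have "m dvd i" using g by (metis coprime_dvd_mult_left_iff coprime_iff_gcd_eq_1)
      then show "i = 0" using \<open>i < m\<close> by (auto dest: dvd_imp_le)
    qed
  next
    assume A: "\<forall>i. i < m \<and> [i * k = i] (mod m) \<longrightarrow> i = 0"
    define d where "d = gcd m (k - 1)"
    have d0: "d > 0" using m0 by (simp add: d_def)
    have dm: "d dvd m" "d dvd k - 1" by (simp_all add: d_def)
    show "gcd m (k - 1) = 1"
    proof (rule ccontr)
      assume "gcd m (k - 1) \<noteq> 1"
      then have d2: "d > 1" using d0 unfolding d_def by linarith
      define i where "i = m div d"
      have "i < m" using d2 m0 by (simp add: i_def)
      moreover have "m dvd i * (k - 1)"
      proof -
        obtain e where "k - 1 = d * e" using dm(2) by blast
        then have "i * (k - 1) = m * e" using dm(1) by (simp add: i_def)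
        then show ?thesis by simp
      qed
      ultimately have "i = 0" using A eq by blast
      then show False using dm(1) m0 d0 by (auto simp: i_def elim!: dvdE)
    qed
  qed
qed

lemma centH_iff: "centH \<longleftrightarrow> gcd m (k - 1) = 1 \<and> n = ind_mod m k"
proof
  assume C: centH
  have cw: "w = 0" if "w \<in> carrier H" "\<And>j' i'. j' < n \<Longrightarrow> i' < m \<Longrightarrow> w \<otimes>\<^bsub>H\<^esub> (j' * m + i') = (j' * m + i') \<otimes>\<^bsub>H\<^esub> w" for w
  proof -
    have "\<forall>v\<in>carrier H. w \<otimes>\<^bsub>H\<^esub> v = v \<otimes>\<^bsub>H\<^esub> w"
      using that(2) carrier_dec unfolding H_carrier by (metis lessThan_iff)
    then show ?thesis using C that(1) unfolding centH_def by blast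
  qed
  have "\<forall>j. 0 < j \<and> j < n \<longrightarrow> \<not> [k ^ j = 1] (mod m)"
  proof (intro allI impI notI)
    fix j assume j: "0 < j \<and> j < n" and kj: "[k ^ j = 1] (mod m)"
    have "j * m + 0 = 0"
    proof (rule cw)
      show "j * m + 0 \<in> carrier H" using enc_lt[of j 0] j m0 by (simp add: H_carrier)
      fix j' i' assume "j' < n" "i' < m"
      have "[i' * k ^ j = i' * 1] (mod m)" by (intro cong_mult cong_refl kj)
      then show "(j * m + 0) \<otimes>\<^bsub>H\<^esub> (j' * m + i') = (j' * m + i') \<otimes>\<^bsub>H\<^esub> (j * m + 0)"
        using comm_enc[of 0 i' j j'] m0 \<open>i' < m\<close> by (simp add: cong_sym)
    qed
    then show False using j m0 by simp
  qed
  moreover have "\<forall>i. i < m \<and> [i * k = i] (mod m) \<longrightarrow> i = 0"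
  proof (intro allI impI)
    fix i assume i: "i < m \<and> [i * k = i] (mod m)"
    have "0 * m + i = 0"
    proof (rule cw)
      show "0 * m + i \<in> carrier H" using enc_lt[of 0 i] i n0 by (simp add: H_carrier)
      fix j' i' assume "j' < n" "i' < m"
      have "[i * k ^ j' = i] (mod m)" using ckj i by blast
      then have "[i * k ^ j' + i' = i + i'] (mod m)" by (rule cong_add[OF _ cong_refl])
      then have "[i * k ^ j' + i' = i' * k ^ 0 + i] (mod m)" by (simp only: power_0 mult_1_right add.commute[of i i'])
      then show "(0 * m + i) \<otimes>\<^bsub>H\<^esub> (j' * m + i') = (j' * m + i') \<otimes>\<^bsub>H\<^esub> (0 * m + i)"
        using comm_enc[of i i' 0 j'] i \<open>i' < m\<close> by blast
    qed
    then show "i = 0" by simp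
  qed
  ultimately show "gcd m (k - 1) = 1 \<and> n = ind_mod m k" unfolding ind_iff gcd_iff by (rule conjI[rotated])
next
  assume "gcd m (k - 1) = 1 \<and> n = ind_mod m k"
  then have A0: "gcd m (k - 1) = 1" "n = ind_mod m k" by blast+
  then have A: "\<forall>j. 0 < j \<and> j < n \<longrightarrow> \<not> [k ^ j = 1] (mod m)"
    and B: "\<forall>i. i < m \<and> [i * k = i] (mod m) \<longrightarrow> i = 0" unfolding ind_iff gcd_iff by blast+
  show centH unfolding centH_def
  proof (intro ballI impI)
    fix w assume w: "w \<in> carrier H" and c: "\<forall>v\<in>carrier H. w \<otimes>\<^bsub>H\<^esub> v = v \<otimes>\<^bsub>H\<^esub> w"
    obtain j i where ji: "w = j * m + i" "j < n" "i < m"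
      using w carrier_dec unfolding H_carrier by (metis lessThan_iff)
    have "w \<otimes>\<^bsub>H\<^esub> xH = xH \<otimes>\<^bsub>H\<^esub> w" using c xH_in by blast
    then have "(j * m + i) \<otimes>\<^bsub>H\<^esub> (0 * m + 1 mod m) = (0 * m + 1 mod m) \<otimes>\<^bsub>H\<^esub> (j * m + i)"
      by (simp only: ji(1) xH_def)
    then have c1: "[i * k ^ 0 + 1 mod m = (1 mod m) * k ^ j + i] (mod m)"
      by (simp only: comm_enc[OF ji(3) mm])
    have c3: "[(1 mod m) * k ^ j + i = 1 * k ^ j + i] (mod m)"
      by (intro cong_add cong_mult cong_refl) (simp add: cong_def)
    have c2: "[1 mod m + i = (1 mod m) * k ^ j + i] (mod m)"
      using c1 by (simp only: power_0 mult_1_right add.commute[of i])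
    have "[1 mod m + i = k ^ j + i] (mod m)"
      using cong_trans[OF c2 c3] by (simp only: mult_1_left)
    then have "[1 mod m = k ^ j] (mod m)" by (simp only: cong_add_rcancel_nat)
    then have "[1 = k ^ j] (mod m)" by (simp only: cong_def mod_mod_trivial)
    then have kj1: "[k ^ j = 1] (mod m)" by (rule cong_sym)
    have j0: "j = 0"
    proof (rule ccontr)
      assume "j \<noteq> 0"
      then have "0 < j \<and> j < n" using ji(2) by simp
      then show False using A kj1 by blast
    qed
    have "w \<otimes>\<^bsub>H\<^esub> yH = yH \<otimes>\<^bsub>H\<^esub> w" using c yH_in by blast
    then have "(j * m + i) \<otimes>\<^bsub>H\<^esub> ((1 mod n) * m + (l * (1 div n)) mod m) = ((1 mod n) * m + (l * (1 div n)) mod m) \<otimes>\<^bsub>H\<^esub> (j * m + i)"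
      by (simp only: ji(1) yH_def)
    then have "[i * k ^ (1 mod n) + (l * (1 div n)) mod m = ((l * (1 div n)) mod m) * k ^ j + i] (mod m)"
      by (simp only: comm_enc[OF ji(3) mm])
    then have "[i * k ^ (1 mod n) + (l * (1 div n)) mod m = i + (l * (1 div n)) mod m] (mod m)"
      by (simp only: j0 power_0 mult_1_right add.commute[of _ i])
    then have "[i * k ^ (1 mod n) = i] (mod m)"
      by (simp only: cong_add_rcancel_nat)
    moreover have "[i * k ^ (1 mod n) = i * k ^ 1] (mod m)"
      by (rule cong_mult[OF cong_refl[of i] kmod[of 1]])
    ultimately have "[i * k = i] (mod m)" by (metis cong_sym cong_trans power_one_right)
    then have "i = 0" using B ji(3) by blast
    then show "w = 0" using ji j0 by simp
  qed
qed

end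

lemma center_triv_iff:
  assumes "group G"
  shows "group_center G = {\<one>\<^bsub>G\<^esub>} \<longleftrightarrow>
    (\<forall>z\<in>carrier G. (\<forall>y\<in>carrier G. z \<otimes>\<^bsub>G\<^esub> y = y \<otimes>\<^bsub>G\<^esub> z) \<longrightarrow> z = \<one>\<^bsub>G\<^esub>)"
proof -
  interpret group G by (rule assms)
  have "\<one>\<^bsub>G\<^esub> \<in> group_center G" unfolding group_center_def by simp
  then show ?thesis unfolding group_center_def by blast
qed

locale mpG = mp m n k l + group G for m n k l and G (structure) +
  fixes a b :: 'a and h :: "'a \<Rightarrow> nat"
  assumes rels: "meta_rels G a b m n k l"
    and gen: "generate G {a, b} = carrier G"
    and hom: "h \<in> hom G H" and ha: "h a = xH" and hb: "h b = yH"
begin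

lemma a_in: "a \<in> carrier G" and b_in: "b \<in> carrier G" and am: "a [^] m = \<one>"
  and bn: "b [^] n = a [^] l" and conj: "inv b \<otimes> a \<otimes> b = a [^] k"
  using rels unfolding meta_rels_def by auto

lemma ab: "a \<otimes> b = b \<otimes> a [^] k"
proof -
  have "b \<otimes> (inv b \<otimes> a \<otimes> b) = a \<otimes> b"
    using a_in b_in by (simp add: m_assoc[symmetric])
  then show ?thesis using conj by simp
qed

lemma aib: "a [^] i \<otimes> b = b \<otimes> a [^] (i * k)"
proof (induction i)
  case 0 then show ?case using b_in by simp
next
  case (Suc i)
  have "a [^] Suc i \<otimes> b = a [^] i \<otimes> (a \<otimes> b)" using a_in b_in by (simp add: m_assoc)
  also have "\<dots> = (a [^] i \<otimes> b) \<otimes> a [^] k" using a_in b_in by (simp add: ab m_assoc)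
  also have "\<dots> = b \<otimes> (a [^] (i * k) \<otimes> a [^] k)" using a_in b_in by (simp add: Suc m_assoc)
  also have "\<dots> = b \<otimes> a [^] (Suc i * k)" using a_in by (simp add: nat_pow_mult add.commute)
  finally show ?case .
qed

lemma aibj: "a [^] i \<otimes> b [^] j = b [^] j \<otimes> a [^] (i * k ^ j)"
proof (induction j arbitrary: i)
  case 0 then show ?case using a_in by simp
next
  case (Suc j)
  have "a [^] i \<otimes> b [^] Suc j = (a [^] i \<otimes> b [^] j) \<otimes> b" using a_in b_in by (simp add: m_assoc)
  also have "\<dots> = b [^] j \<otimes> (a [^] (i * k ^ j) \<otimes> b)" using a_in b_in by (simp add: Suc m_assoc)
  also have "\<dots> = (b [^] j \<otimes> b) \<otimes> a [^] (i * k ^ j * k)" using a_in b_in by (simp add: aib m_assoc)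
  also have "\<dots> = b [^] Suc j \<otimes> a [^] (i * k ^ Suc j)" by (simp add: mult.assoc mult.commute[of k])
  finally show ?case .
qed

lemma prodf: "(b [^] j \<otimes> a [^] i) \<otimes> (b [^] j' \<otimes> a [^] i') = b [^] (j + j') \<otimes> a [^] (i * k ^ j' + i')"
proof -
  have "(b [^] j \<otimes> a [^] i) \<otimes> (b [^] j' \<otimes> a [^] i') = b [^] j \<otimes> (a [^] i \<otimes> b [^] j') \<otimes> a [^] i'"
    using a_in b_in by (simp add: m_assoc)
  also have "\<dots> = (b [^] j \<otimes> b [^] j') \<otimes> (a [^] (i * k ^ j') \<otimes> a [^] i')"
    using a_in b_in by (simp add: aibj m_assoc)
  also have "\<dots> = b [^] (j + j') \<otimes> a [^] (i * k ^ j' + i')"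
    using a_in b_in by (simp add: nat_pow_mult)
  finally show ?thesis .
qed

lemma amod: "a [^] i = a [^] (i mod m)"
proof -
  have "a [^] i = a [^] (m * (i div m) + i mod m)" by simp
  also have "\<dots> = (a [^] m) [^] (i div m) \<otimes> a [^] (i mod m)"
    using a_in by (simp add: nat_pow_mult nat_pow_pow)
  also have "\<dots> = a [^] (i mod m)" using a_in by (simp add: am)
  finally show ?thesis .
qed

lemma bred: "b [^] j = b [^] (j mod n) \<otimes> a [^] (l * (j div n))"
proof -
  have "b [^] j = b [^] (j mod n + n * (j div n))" by simp
  also have "\<dots> = b [^] (j mod n) \<otimes> (b [^] n) [^] (j div n)"
    using b_in by (simp add: nat_pow_mult nat_pow_pow)
  also have "\<dots> = b [^] (j mod n) \<otimes> a [^] (l * (j div n))"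
    using a_in by (simp add: bn nat_pow_pow)
  finally show ?thesis .
qed

lemma gen_sub: "g \<in> generate G {a, b} \<Longrightarrow> \<exists>(j::nat) (i::nat). g = b [^] j \<otimes> a [^] i"
proof (induction rule: generate.induct)
  case one
  show ?case by (rule exI[of _ "0::nat"], rule exI[of _ "0::nat"]) simp
next
  case (incl g)
  then show ?case
  proof
    assume "g = a" then show ?thesis using a_in by (intro exI[of _ "0::nat"] exI[of _ "1::nat"]) simp
  next
    assume "g \<in> {b}" then show ?thesis using b_in by (intro exI[of _ "1::nat"] exI[of _ "0::nat"]) simp
  qed
next
  case (inv g)
  then show ?case
  proof
    assume g: "g = a"
    have "a [^] (m - 1) \<otimes> a = a [^] m" using m0 by (metis Suc_diff_1 nat_pow_Suc)
    then have ia: "inv a = a [^] (m - 1)" using a_in by (intro inv_equality) (simp_all add: am)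
    have "inv g = b [^] (0::nat) \<otimes> a [^] (m - 1)" using a_in b_in by (simp add: g ia)
    then show ?thesis by blast
  next
    assume "g \<in> {b}"
    then have g: "g = b" by simp
    have bb: "b [^] (n - 1) \<otimes> b = b [^] n"
      using n0 by (metis Suc_diff_1 nat_pow_Suc)
    have ml: "(m - 1) * l + l = m * l" using m0 by (cases m) auto
    have "(a [^] ((m - 1) * l) \<otimes> b [^] (n - 1)) \<otimes> b = a [^] ((m - 1) * l) \<otimes> (b [^] (n - 1) \<otimes> b)"
      using a_in b_in by (intro m_assoc) auto
    also have "\<dots> = a [^] ((m - 1) * l) \<otimes> a [^] l" by (simp only: bb bn)
    also have "\<dots> = a [^] ((m - 1) * l + l)" by (rule nat_pow_mult[OF a_in])
    also have "\<dots> = (a [^] m) [^] l" by (simp only: ml nat_pow_pow[OF a_in])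
    also have "\<dots> = \<one>" by (simp only: am nat_pow_one)
    finally have "inv b = a [^] ((m - 1) * l) \<otimes> b [^] (n - 1)" using a_in b_in by (intro inv_equality) simp_all
    then have "inv g = b [^] (n - 1) \<otimes> a [^] ((m - 1) * l * k ^ (n - 1))" by (simp add: g aibj)
    then show ?thesis by blast
  qed
next
  case (eng g1 g2)
  then obtain j i j' i' :: nat where "g1 = b [^] j \<otimes> a [^] i" "g2 = b [^] j' \<otimes> a [^] i'" by blast
  then show ?case by (simp add: prodf) blast
qed

lemma nf: "g \<in> carrier G \<Longrightarrow> \<exists>j i. j < n \<and> i < m \<and> g = b [^] j \<otimes> a [^] i"
proof -
  assume "g \<in> carrier G"
  then obtain j i :: nat where g: "g = b [^] j \<otimes> a [^] i" using gen_sub gen by blast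
  also have "\<dots> = b [^] (j mod n) \<otimes> a [^] (l * (j div n)) \<otimes> a [^] i" by (subst bred) (rule refl)
  also have "\<dots> = b [^] (j mod n) \<otimes> a [^] ((l * (j div n) + i) mod m)"
    using a_in b_in by (simp add: m_assoc nat_pow_mult flip: amod)
  finally show ?thesis using n0 m0 by (intro exI conjI) auto
qed

lemma h_nf: "j < n \<Longrightarrow> i < m \<Longrightarrow> h (b [^] j \<otimes> a [^] i) = j * m + i"
proof -
  assume ji: "j < n" "i < m"
  have gh: "group H" by (rule H_group)
  have "h (b [^] j \<otimes> a [^] i) = h (b [^] j) \<otimes>\<^bsub>H\<^esub> h (a [^] i)"
    using hom a_in b_in by (simp add: hom_mult)
  also have "\<dots> = yH [^]\<^bsub>H\<^esub> j \<otimes>\<^bsub>H\<^esub> xH [^]\<^bsub>H\<^esub> i"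
    using hom a_in b_in gh is_group by (simp add: hom_nat_pow ha hb)
  also have "\<dots> = (j * m + 0) \<otimes>\<^bsub>H\<^esub> (0 * m + i)"
    using ji by (simp add: xH_pow yH_pow)
  also have "\<dots> = j * m + i" using ji by (simp only: H_mult_enc[OF m0 ji(2), of j 0]) simp
  finally show ?thesis .
qed

lemma h_inj: "g1 \<in> carrier G \<Longrightarrow> g2 \<in> carrier G \<Longrightarrow> h g1 = h g2 \<Longrightarrow> g1 = g2"
proof -
  assume g: "g1 \<in> carrier G" "g2 \<in> carrier G" "h g1 = h g2"
  obtain j i where 1: "j < n" "i < m" "g1 = b [^] j \<otimes> a [^] i" using nf g(1) by blast
  obtain j' i' where 2: "j' < n" "i' < m" "g2 = b [^] j' \<otimes> a [^] i'" using nf g(2) by blast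
  have "j * m + i = j' * m + i'" using g(3) 1 2 h_nf by simp
  then have "j = j' \<and> i = i'" using enc_inj 1 2 by blast
  then show ?thesis using 1 2 by simp
qed

lemma h_surj: "w \<in> carrier H \<Longrightarrow> \<exists>g\<in>carrier G. h g = w"
proof -
  assume "w \<in> carrier H"
  then have "w = (w div m) * m + w mod m" "w div m < n" "w mod m < m"
    using carrier_dec unfolding H_carrier by auto
  then show ?thesis using h_nf a_in b_in by (metis m_closed nat_pow_closed)
qed

lemma h_in: "g \<in> carrier G \<Longrightarrow> h g \<in> carrier H"
  using hom by (auto simp: hom_def)

lemma h_mult: "g1 \<in> carrier G \<Longrightarrow> g2 \<in> carrier G \<Longrightarrow> h (g1 \<otimes> g2) = h g1 \<otimes>\<^bsub>H\<^esub> h g2"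
  using hom by (simp add: hom_mult)

lemma h_one: "h \<one> = 0"
proof -
  have "group_hom G H h" using hom H_group is_group by (simp add: group_hom_def group_hom_axioms_def)
  then show ?thesis by (simp add: group_hom.hom_one H_one)
qed

lemma center_iff: "group_center G = {\<one>} \<longleftrightarrow> centH"
  unfolding center_triv_iff[OF is_group] centH_def
proof
  assume A: "\<forall>z\<in>carrier G. (\<forall>y\<in>carrier G. z \<otimes> y = y \<otimes> z) \<longrightarrow> z = \<one>"
  show "\<forall>w\<in>carrier H. (\<forall>v\<in>carrier H. w \<otimes>\<^bsub>H\<^esub> v = v \<otimes>\<^bsub>H\<^esub> w) \<longrightarrow> w = 0"
  proof (intro ballI impI)
    fix w assume w: "w \<in> carrier H" and c: "\<forall>v\<in>carrier H. w \<otimes>\<^bsub>H\<^esub> v = v \<otimes>\<^bsub>H\<^esub> w"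
    obtain z where z: "z \<in> carrier G" "h z = w" using h_surj w by blast
    have "\<forall>y\<in>carrier G. z \<otimes> y = y \<otimes> z"
    proof
      fix y assume y: "y \<in> carrier G"
      have "h (z \<otimes> y) = h (y \<otimes> z)" using c z y h_in by (simp add: h_mult)
      then show "z \<otimes> y = y \<otimes> z" using h_inj z y by simp
    qed
    then have "z = \<one>" using A z by blast
    then show "w = 0" using z h_one by simp
  qed
next
  assume A: "\<forall>w\<in>carrier H. (\<forall>v\<in>carrier H. w \<otimes>\<^bsub>H\<^esub> v = v \<otimes>\<^bsub>H\<^esub> w) \<longrightarrow> w = 0"
  show "\<forall>z\<in>carrier G. (\<forall>y\<in>carrier G. z \<otimes> y = y \<otimes> z) \<longrightarrow> z = \<one>"
  proof (intro ballI impI)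
    fix z assume z: "z \<in> carrier G" and c: "\<forall>y\<in>carrier G. z \<otimes> y = y \<otimes> z"
    have "\<forall>v\<in>carrier H. h z \<otimes>\<^bsub>H\<^esub> v = v \<otimes>\<^bsub>H\<^esub> h z"
    proof
      fix v assume "v \<in> carrier H"
      then obtain y where y: "y \<in> carrier G" "h y = v" using h_surj by blast
      then show "h z \<otimes>\<^bsub>H\<^esub> v = v \<otimes>\<^bsub>H\<^esub> h z" using c z by (metis h_mult)
    qed
    then have "h z = 0" using A z h_in by blast
    then have "h z = h \<one>" using h_one by simp
    then show "z = \<one>" using h_inj z by simp
  qed
qed

end

theorem lemma2p2:
  fixes k l m n :: nat and G :: "('g, 'e) monoid_scheme" and a b :: 'g
  assumes "0 < k" "0 < l" "0 < m" "0 < n"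
    and "[k ^ n = 1] (mod m)"
    and "[l * (k - 1) = 0] (mod m)"
    and "presents_meta G a b m n k l"
  shows "group_center G = {\<one>\<^bsub>G\<^esub>} \<longleftrightarrow> gcd m (k - 1) = 1 \<and> n = ind_mod m k"
proof -
  interpret P: mp m n k l using assms by unfold_locales auto
  have gG: "group G" and rG: "meta_rels G a b m n k l" and gen: "generate G {a, b} = carrier G"
    and U: "\<And>(H :: nat monoid) x y. group H \<Longrightarrow> meta_rels H x y m n k l \<Longrightarrow> \<exists>h \<in> hom G H. h a = x \<and> h b = y"
    using assms(7) unfolding presents_meta_def by blast+
  obtain h where h: "h \<in> hom G P.H" "h a = P.xH" "h b = P.yH"
    using U[OF P.H_group P.H_rels] by blast
  interpret Q: mpG m n k l G a b h
    by (intro mpG.intro mpG_axioms.intro) (simp_all add: P.mp_axioms gG rG gen h)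
  show ?thesis using Q.center_iff P.centH_iff by simp
qed

end
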